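(* Let $q$ be a power of an odd prime, write $q-1=2^s r$ with $r$ odd, let $c\in\mathbb{F}_q^*$, and $f(X)=c(X^{q+1}-X^2)$ on $\mathbb{F}_{q^2}$. Let $P$ be any periodic point of $f$ not lying in the connected component of $0$ in the functional graph of $f$. Then the subgraph consisting of $P$ together with all non-periodic $v\in\mathbb{F}_{q^2}$ such that $P$ is the first periodic element of the sequence $v,f(v),f^{(2)}(v),\dots$ (with the edges $x\to f(x)$ among these vertices) is a tree isomorphic to $\mathscr{T}(s)$ with root $P$.
   Context: The functional graph of $f$ is the directed graph on $\mathbb{F}_{q^2}$ with edges $x\to f(x)$; $\alpha$ is periodic if $f^{(n)}(\alpha)=\alpha$ for some $n\ge1$. $\mathscr{T}(1)$ is the tree with two vertices $P_1,P$ and the edge $P_1\to P$ (root $P$); for $m\ge1$, $\mathscr{T}(m+1)$ is obtained from $\mathscr{T}(m)$ by attaching two new vertices, each with an edge directed to it, to every vertex of the last (top) level of $\mathscr{T}(m)$. *)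

theory Defs
  imports "HOL-Computational_Algebra.Primes"
begin

definition periodic :: "('a \<Rightarrow> 'a) \<Rightarrow> 'a \<Rightarrow> bool" where
  "periodic f x \<longleftrightarrow> (\<exists>n\<ge>1. (f ^^ n) x = x)"

text \<open>x and y lie in the same connected component of the functional graph of f
  (for a functional graph this means that their forward orbits meet).\<close>
definition same_component :: "('a \<Rightarrow> 'a) \<Rightarrow> 'a \<Rightarrow> 'a \<Rightarrow> bool" where
  "same_component f x y \<longleftrightarrow> (\<exists>m n. (f ^^ m) x = (f ^^ n) y)"

definition first_periodic :: "('a \<Rightarrow> 'a) \<Rightarrow> 'a \<Rightarrow> 'a \<Rightarrow> bool" where
  "first_periodic f v P \<longleftrightarrow>
     (\<exists>n. (f ^^ n) v = P \<and> periodic f P \<and> (\<forall>k<n. \<not> periodic f ((f ^^ k) v)))"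

definition tree_at :: "('a \<Rightarrow> 'a) \<Rightarrow> 'a \<Rightarrow> 'a set" where
  "tree_at f P = insert P {v. \<not> periodic f v \<and> first_periodic f v P}"

text \<open>Vertices are words over bool; the root P is encoded by the empty word [],
  P_1 by [False]; a vertex w gets the two new vertices w @ [False], w @ [True]
  attached.  T(m) is given by (vertex set, edge relation, top level), defined
  recursively exactly as in the paper.\<close>
fun Tree :: "nat \<Rightarrow> bool list set \<times> (bool list \<times> bool list) set \<times> bool list set" where
  "Tree 0 = ({[]}, {}, {[]})"
| "Tree (Suc 0) = ({[], [False]}, {([False], [])}, {[False]})"
| "Tree (Suc (Suc m)) =
     (let (V, E, L) = Tree (Suc m);
          N = {w @ [b] | w b. w \<in> L}
      in (V \<union> N, E \<union> {(w @ [b], w) | w b. w \<in> L}, N))"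

definition T_verts :: "nat \<Rightarrow> bool list set" where
  "T_verts m = fst (Tree m)"

definition T_edges :: "nat \<Rightarrow> (bool list \<times> bool list) set" where
  "T_edges m = fst (snd (Tree m))"

text \<open>The subgraph on vertex set V (with edges x \<rightarrow> f x among these vertices) is a
  tree isomorphic to T(m) with root P.  The root P is periodic, so its outgoing edge
  (possibly a self-loop when f P = P) does not belong to the tree; only edges
  x \<rightarrow> f x with x \<noteq> P are counted.\<close>
definition iso_to_T :: "('a \<Rightarrow> 'a) \<Rightarrow> 'a set \<Rightarrow> 'a \<Rightarrow> nat \<Rightarrow> bool" where
  "iso_to_T f V P m \<longleftrightarrow>
     (\<exists>\<phi>. bij_betw \<phi> V (T_verts m) \<and> \<phi> P = [] \<and>
        (\<forall>u\<in>V. \<forall>v\<in>V. (u \<noteq> P \<and> f u = v) \<longleftrightarrow> (\<phi> u, \<phi> v) \<in> T_edges m))"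

end

theory Submission
  imports Defs "HOL-Computational_Algebra.Polynomial"
begin


lemma roots_pow_bound:
  fixes b :: "'a::field"
  assumes "n \<ge> 1"
  shows "card {x. x ^ n = b} \<le> n"
proof -
  let ?p = "monom 1 n - [:b:]"
  have e: "?p = monom 1 n + [:-b:]" by (simp add: diff_conv_add_uminus)
  have "degree [:-b:] < degree (monom (1::'a) n)" using assms by (simp add: degree_monom_eq)
  hence deg: "degree ?p = n" unfolding e by (subst degree_add_eq_left) (auto simp: degree_monom_eq)
  hence nz: "?p \<noteq> 0" using assms by auto
  have "{x. x ^ n = b} = {x. poly ?p x = 0}" by (auto simp: poly_monom)
  thus ?thesis using card_poly_roots_bound[OF nz] deg by simp
qed

lemma roots_pow_finite:
  fixes b :: "'a::field"
  assumes "n \<ge> 1"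
  shows "finite {x. x ^ n = b}"
proof -
  let ?p = "monom 1 n - [:b:]"
  have e: "?p = monom 1 n + [:-b:]" by (simp add: diff_conv_add_uminus)
  have "degree [:-b:] < degree (monom (1::'a) n)" using assms by (simp add: degree_monom_eq)
  hence deg: "degree ?p = n" unfolding e by (subst degree_add_eq_left) (auto simp: degree_monom_eq)
  hence nz: "?p \<noteq> 0" using assms by auto
  have "{x. x ^ n = b} = {x. poly ?p x = 0}" by (auto simp: poly_monom)
  thus ?thesis using poly_roots_finite[OF nz] by simp
qed

lemma card_fibers:
  assumes "finite A" "\<And>b. b \<in> g ` A \<Longrightarrow> card {a\<in>A. g a = b} \<le> m"
  shows "card A \<le> m * card (g ` A)"
proof -
  have e: "(\<Union>b\<in>g ` A. {a\<in>A. g a = b}) = A" by auto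
  have "card (\<Union>b\<in>g ` A. {a\<in>A. g a = b}) \<le> (\<Sum>b\<in>g ` A. card {a\<in>A. g a = b})"
    by (rule card_UN_le) (use assms in auto)
  hence "card A \<le> (\<Sum>b\<in>g ` A. card {a\<in>A. g a = b})" by (simp only: e)
  also have "\<dots> \<le> (\<Sum>b\<in>g ` A. m)" by (rule sum_mono) (use assms in auto)
  finally show ?thesis by (simp add: mult.commute)
qed

lemma fermat_field:
  fixes x :: "'a::{finite,field}"
  shows "x ^ card (UNIV :: 'a set) = x"
proof (cases "x = 0")
  case False
  have "x * (\<Prod>y\<in>UNIV-{0}. x * y) = x * x ^ (card (UNIV :: 'a set) - 1) * \<Prod>(UNIV-{0})"
    by (simp add: prod.distrib mult_ac)
  also have "x * x ^ (card (UNIV :: 'a set) - 1) = x ^ Suc (card (UNIV :: 'a set) - 1)"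
    by (subst power_Suc) auto
  also have "Suc (card (UNIV :: 'a set) - 1) = card (UNIV :: 'a set)"
    using finite_UNIV_card_ge_0[where ?'a = 'a] by simp
  also have "(\<Prod>y\<in>UNIV-{0}. x * y) = (\<Prod>y\<in>UNIV-{0}. y)"
    by (rule prod.reindex_bij_witness[of _ "\<lambda>y. y / x" "\<lambda>y. x * y"]) (use False in auto)
  finally show ?thesis
    by simp
qed (use finite_UNIV_card_ge_0[where ?'a = 'a] in auto)

lemma card_times_zero:
  shows "of_nat (card (UNIV :: 'a::{finite,field} set)) = (0::'a)"
proof -
  have "(\<Sum>y\<in>UNIV. y + 1) = (\<Sum>y\<in>(UNIV::'a set). y)"
    by (rule sum.reindex_bij_witness[of _ "\<lambda>y. y - 1" "\<lambda>y. y + 1"]) auto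
  thus ?thesis by (simp add: sum.distrib)
qed

lemma pow_coprime_one:
  fixes a :: "'a::comm_monoid_mult"
  assumes "a ^ m = 1" "a ^ n = 1" "coprime m n" "m \<noteq> 0"
  shows "a = 1"
proof -
  obtain x y where xy: "m * x = n * y + gcd m n" using bezout_nat[OF assms(4)] by blast
  hence "m * x = n * y + 1" using assms(3) by simp
  hence "a ^ (m * x) = a ^ (n * y) * a" by (simp add: power_add mult.commute)
  thus ?thesis using assms(1,2) by (simp add: power_mult)
qed

lemma fp_add: "(f ^^ a) ((f ^^ b) x) = (f ^^ (a + b)) x"
  by (simp add: funpow_add)

lemma per_mult: "(f ^^ L) x = x \<Longrightarrow> (f ^^ (L * m)) x = x"
proof (induction m)
  case (Suc m)
  have "(f ^^ (L * Suc m)) x = (f ^^ L) ((f ^^ (L * m)) x)" by (simp add: fp_add)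
  thus ?case using Suc by simp
qed simp

lemma per_iter: "periodic f x \<Longrightarrow> periodic f ((f ^^ m) x)"
  unfolding periodic_def
proof (elim exE conjE)
  fix n assume "n \<ge> 1" "(f ^^ n) x = x"
  hence "(f ^^ n) ((f ^^ m) x) = (f ^^ m) x" by (metis fp_add add.commute)
  thus "\<exists>n\<ge>1. (f ^^ n) ((f ^^ m) x) = (f ^^ m) x" using \<open>n \<ge> 1\<close> by blast
qed

lemma per_f: "periodic f x \<Longrightarrow> periodic f (f x)"
  using per_iter[of f x 1] by simp




locale qf =
  fixes q s r :: nat and c :: "'a::{finite,field}" and f :: "'a \<Rightarrow> 'a" and pp kk :: nat
  assumes pk: "prime pp" "odd pp" "kk \<ge> 1" "q = pp ^ kk"
    and card: "card (UNIV :: 'a set) = q ^ 2"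
    and sr: "q - 1 = 2 ^ s * r" and r_odd: "odd r"
    and c_Fq: "c ^ q = c" and c_nz: "c \<noteq> 0"
    and f_def: "\<And>x. f x = c * (x ^ (q + 1) - x ^ 2)"
begin

lemma q_odd: "odd q" using pk by simp

lemma p_ge: "pp \<ge> 2" using pk prime_ge_2_nat by blast

lemma q_ge: "q \<ge> 2"
proof -
  have "pp ^ 1 \<le> pp ^ kk" using pk p_ge by (intro power_increasing) auto
  thus ?thesis using p_ge pk by simp
qed

lemma s_pos: "s \<ge> 1"
proof (rule ccontr)
  assume "\<not> s \<ge> 1"
  hence "q - 1 = r" using sr by simp
  moreover obtain m where "q = 2 * m + 1" using q_odd oddE by blast
  ultimately have "r = 2 * m" by simp
  thus False using r_odd by simp
qed

lemma char_p: "of_nat pp = (0::'a)"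
proof -
  have "of_nat (q ^ 2) = (0::'a)" using card_times_zero[where 'a='a] card by simp
  hence "(of_nat pp :: 'a) ^ (kk * 2) = 0" using pk by (simp add: power_mult)
  thus ?thesis by simp
qed

lemma CHAR_p: "CHAR('a) = pp"
proof -
  have d: "CHAR('a) dvd pp" using char_p of_nat_eq_0_iff_char_dvd by blast
  have "CHAR('a) \<noteq> 1" by simp
  moreover have "\<forall>m. m dvd pp \<longrightarrow> m = 1 \<or> m = pp" using pk(1) by (simp add: prime_nat_iff)
  ultimately show ?thesis using d by blast
qed

lemma frob_add: "(x + y) ^ q = x ^ q + (y::'a) ^ q"
  by (rule freshmans_dream') (use CHAR_p pk in auto)

lemma frob_neg: "(- x) ^ q = - ((x::'a) ^ q)"
  using q_odd by (simp add: power_minus_odd)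

lemma frob_diff: "(x - y) ^ q = x ^ q - (y::'a) ^ q"
  using frob_add[of x "-y"] frob_neg[of y] by simp

lemma frob2: "((x::'a) ^ q) ^ q = x"
  using fermat_field[of x] card by (simp add: power_mult[symmetric] power2_eq_square)

lemma two_nz: "(2::'a) \<noteq> 0"
proof
  assume h: "(2::'a) = 0"
  obtain m where "pp = 2 * m + 1" using pk(2) oddE by blast
  hence "(of_nat pp :: 'a) = 2 * of_nat m + 1" by simp
  thus False using h char_p by simp
qed

lemma neg_ne: "(x::'a) \<noteq> 0 \<Longrightarrow> - x \<noteq> x"
proof
  assume "x \<noteq> 0" "- x = x"
  have "2 * x = x - (- x)" by simp
  hence "2 * x = 0" using \<open>- x = x\<close> by simp
  thus False using two_nz \<open>x \<noteq> 0\<close> by simp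
qed

lemma f_zero: "f 0 = 0" by (simp add: f_def)

lemma f_neg: "f (- x) = f x"
proof -
  have "even (q + 1)" using q_odd by simp
  thus ?thesis by (simp add: f_def power_minus_even)
qed

lemma f_scale: assumes "t ^ q = t" shows "f (t * x) = t ^ 2 * f x"
proof -
  have "t ^ (q + 1) = t ^ 2" using assms by (simp add: power2_eq_square)
  thus ?thesis by (simp add: f_def power_mult_distrib algebra_simps)
qed

lemma Fq_pow: "t ^ q = t \<Longrightarrow> (t ^ n) ^ q = (t::'a) ^ n"
  by (metis power_mult mult.commute)

lemma funpow_scale: assumes "t ^ q = t" shows "(f ^^ n) (t * x) = t ^ (2 ^ n) * (f ^^ n) x"
proof (induction n)
  case (Suc n)
  have "(f ^^ Suc n) (t * x) = f (t ^ (2 ^ n) * (f ^^ n) x)" using Suc by simp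
  also have "\<dots> = (t ^ (2 ^ n)) ^ 2 * f ((f ^^ n) x)" by (rule f_scale, rule Fq_pow, rule assms)
  also have "\<dots> = t ^ (2 ^ Suc n) * (f ^^ Suc n) x" by (simp add: power_mult[symmetric] mult.commute)
  finally show ?case .
qed simp

definition D :: "'a \<Rightarrow> 'a" where "D z = z - z ^ q"

lemma f_D: "f z = - c * z * D z"
  by (simp add: f_def D_def power_add power2_eq_square algebra_simps)

lemma D_q: "(D z) ^ q = - D z"
  by (simp add: D_def frob_diff frob2)

lemma fiber:
  assumes e: "f x = t * f y" and tq: "t ^ q = t" and tnz: "t \<noteq> 0" and fy: "f y \<noteq> 0"
  shows "\<exists>u. u ^ q = u \<and> x = u * y"
proof -
  have E1: "x * D x = t * (y * D y)" using e c_nz by (simp add: f_D algebra_simps)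
  have "(x * D x) ^ q = (t * (y * D y)) ^ q" using E1 by simp
  hence "x ^ q * (- D x) = t * (y ^ q * (- D y))" by (simp add: power_mult_distrib D_q tq)
  hence E2: "x ^ q * D x = t * (y ^ q * D y)" by simp
  have "(x - x ^ q) * D x = t * ((y - y ^ q) * D y)" using E1 E2 by (simp add: algebra_simps)
  hence E3: "D x * D x = t * (D y * D y)" by (simp add: D_def)
  have ynz: "y \<noteq> 0" "D y \<noteq> 0" using fy by (auto simp: f_D)
  have "x * D x * D x = t * y * D y * D x" using E1 by (simp add: algebra_simps)
  hence "x * (t * (D y * D y)) = t * y * D y * D x" using E3 by (simp add: algebra_simps)
  hence "t * D y * (x * D y) = t * D y * (y * D x)" by (simp add: algebra_simps)
  hence "x * D y = y * D x" using tnz ynz by simp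
  hence xe: "x = (D x / D y) * y" using ynz by (simp add: field_simps)
  have "(D x / D y) ^ q = D x / D y" by (simp add: power_divide D_q)
  thus ?thesis using xe by blast
qed

lemma fiber2:
  assumes e: "f x = f y" and fy: "f y \<noteq> 0"
  shows "x = y \<or> x = - y"
proof -
  obtain u where u: "u ^ q = u" "x = u * y" using fiber[of x 1 y] e fy by auto
  have "f x = u ^ 2 * f y" using u f_scale by simp
  hence "u ^ 2 = 1" using e fy by simp
  hence "u = 1 \<or> u = -1" by (simp add: power2_eq_1_iff)
  thus ?thesis using u by auto
qed

end



context qf begin

lemma N_eq: "q ^ 2 - 1 = 2 ^ s * (r * (q + 1))"
proof -
  have "q ^ 2 - 1 = (q - 1) * (q + 1)" using q_ge
    by (simp add: power2_eq_square algebra_simps diff_mult_distrib)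
  also have "\<dots> = 2 ^ s * r * (q + 1)" using sr by simp
  finally show ?thesis by (simp only: mult.assoc)
qed

lemma fermat1: "(x::'a) \<noteq> 0 \<Longrightarrow> x ^ (q ^ 2 - 1) = 1"
proof -
  assume nz: "x \<noteq> 0"
  have "q ^ 2 \<ge> 1" using q_ge by simp
  hence "q ^ 2 = Suc (q ^ 2 - 1)" by simp
  hence "x ^ (q ^ 2) = x * x ^ (q ^ 2 - 1)" by (metis power_Suc)
  thus ?thesis using fermat_field[of x] card nz by simp
qed

lemma card_mu_s: "2 ^ s \<le> card {y::'a. y ^ (2 ^ s) = 1}"
proof -
  define M where "M = r * (q + 1)"
  have "r \<ge> 1" using r_odd by (cases r) auto
  hence Mpos: "M \<ge> 1" unfolding M_def by (simp add: Suc_le_eq)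
  let ?A = "UNIV - {0::'a}"
  let ?B = "{y::'a. y ^ (2 ^ s) = 1}"
  have cardA: "card ?A = q ^ 2 - 1" using card by (simp add: card_Diff_singleton)
  have finB: "finite ?B" by (rule roots_pow_finite) simp
  have sub: "(\<lambda>x. x ^ M) ` ?A \<subseteq> ?B"
  proof
    fix y assume "y \<in> (\<lambda>x. x ^ M) ` ?A"
    then obtain x where x: "x \<noteq> 0" "y = x ^ M" by auto
    have "y ^ (2 ^ s) = x ^ (q ^ 2 - 1)" using x N_eq by (simp add: M_def power_mult[symmetric] mult.commute)
    thus "y \<in> ?B" using fermat1 x by simp
  qed
  have "card ?A \<le> M * card ((\<lambda>x. x ^ M) ` ?A)"
  proof (rule card_fibers)
    fix b
    have "card {a \<in> ?A. a ^ M = b} \<le> card {a. a ^ M = b}"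
      by (rule card_mono) (auto intro: roots_pow_finite Mpos)
    also have "\<dots> \<le> M" by (rule roots_pow_bound[OF Mpos])
    finally show "card {a \<in> ?A. a ^ M = b} \<le> M" .
  qed simp
  also have "\<dots> \<le> M * card ?B" using card_mono[OF finB sub] by simp
  finally have "2 ^ s * M \<le> M * card ?B" using cardA N_eq M_def by simp
  thus ?thesis using Mpos by (simp add: mult.commute)
qed

lemma sqrt_ex:
  assumes "(y::'a) ^ (2 ^ (s - 1)) = 1"
  shows "\<exists>u. u ^ 2 = y \<and> u ^ q = u"
proof -
  let ?B = "{y::'a. y ^ (2 ^ s) = 1}"
  let ?C = "{y::'a. y ^ (2 ^ (s - 1)) = 1}"
  have s2: "(2::nat) ^ s = 2 * 2 ^ (s - 1)" proof -
    have "s = Suc (s - 1)" using s_pos by simp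
    thus ?thesis by (metis power_Suc)
  qed
  have finB: "finite ?B" by (rule roots_pow_finite) simp
  have finC: "finite ?C" by (rule roots_pow_finite) simp
  have sub: "(\<lambda>x. x ^ 2) ` ?B \<subseteq> ?C"
  proof
    fix z assume "z \<in> (\<lambda>x. x ^ 2) ` ?B"
    then obtain x where x: "x ^ (2 ^ s) = 1" "z = x ^ 2" by auto
    have "z ^ (2 ^ (s - 1)) = x ^ (2 ^ s)" using x s2 by (simp add: power_mult[symmetric])
    thus "z \<in> ?C" using x by simp
  qed
  have "card ?B \<le> 2 * card ((\<lambda>x. x ^ 2) ` ?B)"
  proof (rule card_fibers[OF finB])
    fix b
    have "card {a \<in> ?B. a ^ 2 = b} \<le> card {a::'a. a ^ 2 = b}"
      by (rule card_mono) (auto intro: roots_pow_finite)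
    also have "\<dots> \<le> 2" by (rule roots_pow_bound) simp
    finally show "card {a \<in> ?B. a ^ 2 = b} \<le> 2" .
  qed
  hence "2 ^ (s - 1) \<le> card ((\<lambda>x. x ^ 2) ` ?B)" using card_mu_s s2 by simp
  moreover have "card ?C \<le> 2 ^ (s - 1)" by (rule roots_pow_bound) simp
  ultimately have "card ?C \<le> card ((\<lambda>x. x ^ 2) ` ?B)" by simp
  hence eq: "(\<lambda>x. x ^ 2) ` ?B = ?C" using card_seteq[OF finC sub] by simp
  have "y \<in> ?C" using assms by simp
  hence "y \<in> (\<lambda>x. x ^ 2) ` ?B" using eq by simp
  then obtain u where u: "u ^ (2 ^ s) = 1" "y = u ^ 2" by blast
  have "u ^ (q - 1) = 1" using u sr by (simp add: power_mult)
  moreover have "q = Suc (q - 1)" using q_ge by simp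
  ultimately have "u ^ q = u * 1" by (metis power_Suc)
  thus ?thesis using u by auto
qed

end



locale qfP = qf +
  fixes P :: "'a::{finite,field}"
  assumes P_per: "periodic f P" and P_comp: "\<not> same_component f P 0"
begin

lemma f0_iter: "(f ^^ m) 0 = 0"
  by (induction m) (auto simp: f_zero)

lemma nz: "(f ^^ m) x = P \<Longrightarrow> x \<noteq> 0"
proof
  assume "(f ^^ m) x = P" "x = 0"
  hence "(f ^^ 0) P = (f ^^ m) 0" by simp
  thus False using P_comp unfolding same_component_def by blast
qed

lemma P_nz: "P \<noteq> 0" using nz[of 0 P] by simp

lemma pred_per: assumes "periodic f w" shows "\<exists>w'. periodic f w' \<and> f w' = w"
proof -
  obtain L where L: "L \<ge> 1" "(f ^^ L) w = w" using assms unfolding periodic_def by blast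
  have "L = Suc (L - 1)" using L(1) by simp
  hence "(f ^^ L) w = f ((f ^^ (L - 1)) w)" by (metis funpow.simps(2) o_apply)
  thus ?thesis using L per_iter[OF assms, of "L - 1"] by (intro exI[of _ "(f ^^ (L - 1)) w"]) auto
qed

lemma back_k: "\<exists>w. periodic f w \<and> (f ^^ k) w = P"
proof (induction k)
  case 0 thus ?case using P_per by auto
next
  case (Suc k)
  then obtain w where w: "periodic f w" "(f ^^ k) w = P" by blast
  obtain w' where w': "periodic f w'" "f w' = w" using pred_per[OF w(1)] by blast
  have "(f ^^ Suc k) w' = (f ^^ k) (f w')" by (simp only: funpow_Suc_right o_apply)
  thus ?case using w w' by auto
qed

lemma D3:
  assumes v: "(f ^^ k) v = P"
  shows "\<exists>w t. periodic f w \<and> (f ^^ k) w = P \<and> t ^ q = t \<and> t \<noteq> 0 \<and> v = t * w"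
proof -
  obtain w where w: "periodic f w" "(f ^^ k) w = P" using back_k by blast
  have "\<forall>j \<le> k. \<exists>t. t ^ q = t \<and> t \<noteq> 0 \<and> (f ^^ (k - j)) v = t * (f ^^ (k - j)) w"
  proof (intro allI impI)
    fix j assume "j \<le> k"
    thus "\<exists>t. t ^ q = t \<and> t \<noteq> 0 \<and> (f ^^ (k - j)) v = t * (f ^^ (k - j)) w"
    proof (induction j)
      case 0 thus ?case using v w by (intro exI[of _ 1]) auto
    next
      case (Suc j)
      define i where "i = k - Suc j"
      have ki: "k - j = Suc i" using Suc.prems by (simp add: i_def)
      obtain t where t: "t ^ q = t" "t \<noteq> 0" "(f ^^ (k - j)) v = t * (f ^^ (k - j)) w"
        using Suc by auto
      have e: "f ((f ^^ i) v) = t * f ((f ^^ i) w)" using t(3) ki by simp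
      have ksum: "j + Suc i = k" using Suc.prems by (simp add: i_def)
      have "(f ^^ j) ((f ^^ Suc i) w) = P" using w(2) ksum fp_add[of j f "Suc i" w] by simp
      hence "(f ^^ j) (f ((f ^^ i) w)) = P" by simp
      hence fy: "f ((f ^^ i) w) \<noteq> 0" using nz by blast
      obtain u where u: "u ^ q = u" "(f ^^ i) v = u * (f ^^ i) w"
        using fiber[OF e t(1) t(2) fy] by blast
      have "(f ^^ (k - i)) ((f ^^ i) v) = P" using v fp_add[of "k - i" f i v] ksum by simp
      hence "(f ^^ i) v \<noteq> 0" using nz by blast
      hence "u \<noteq> 0" using u by auto
      thus ?case using u by (auto simp: i_def)
    qed
  qed
  from this[rule_format, of k] show ?thesis using w by auto
qed

end



fun lab :: "('a \<Rightarrow> 'a) \<Rightarrow> ('a \<Rightarrow> bool) \<Rightarrow> nat \<Rightarrow> 'a \<Rightarrow> bool list" where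
  "lab g b 0 v = []"
| "lab g b (Suc 0) v = [False]"
| "lab g b (Suc (Suc n)) v = lab g b (Suc n) (g v) @ [b v]"

lemma lab_len: "length (lab g b n v) = n"
  by (induction g b n v rule: lab.induct) auto

lemma lab_hd: "n \<ge> 1 \<Longrightarrow> lab g b n v \<noteq> [] \<and> hd (lab g b n v) = False"
  by (induction g b n v rule: lab.induct) auto

definition Vs :: "nat \<Rightarrow> bool list set" where
  "Vs m = insert [] {w. w \<noteq> [] \<and> hd w = False \<and> length w \<le> m}"
definition Es :: "nat \<Rightarrow> (bool list \<times> bool list) set" where
  "Es m = {(u, w). \<exists>b. u = w @ [b] \<and> ((w = [] \<and> b = False) \<or> (w \<noteq> [] \<and> hd w = False \<and> length w < m))}"
definition Ls :: "nat \<Rightarrow> bool list set" where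
  "Ls m = {w. w \<noteq> [] \<and> hd w = False \<and> length w = m}"

lemma Ls_step: "{w @ [b] |w b. w \<in> Ls (Suc m)} = Ls (Suc (Suc m))"
proof
  show "{w @ [b] |w b. w \<in> Ls (Suc m)} \<subseteq> Ls (Suc (Suc m))"
    by (auto simp: Ls_def)
next
  show "Ls (Suc (Suc m)) \<subseteq> {w @ [b] |w b. w \<in> Ls (Suc m)}"
  proof
    fix x assume x: "x \<in> Ls (Suc (Suc m))"
    hence ne: "x \<noteq> []" and len: "length x = Suc (Suc m)" and hx: "hd x = False" by (auto simp: Ls_def)
    have e: "x = butlast x @ [last x]" using ne by simp
    have bne: "butlast x \<noteq> []" using len by (metis length_butlast diff_Suc_1 list.size(3) nat.distinct(1))
    have "hd x = hd (butlast x)" using e bne by (metis hd_append2)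
    hence "butlast x \<in> Ls (Suc m)" using bne len hx by (simp add: Ls_def)
    thus "x \<in> {w @ [b] |w b. w \<in> Ls (Suc m)}" using e by blast
  qed
qed

lemma Tree_char: "Tree (Suc m) = (Vs (Suc m), Es (Suc m), Ls (Suc m))"
proof (induction m)
  case 0
  have v: "Vs (Suc 0) = {[], [False]}"
  proof -
    have "w \<noteq> [] \<and> hd w = False \<and> length w \<le> Suc 0 \<longleftrightarrow> w = [False]" for w
      by (cases w) auto
    thus ?thesis by (auto simp: Vs_def)
  qed
  have e: "Es (Suc 0) = {([False], [])}" by (auto simp: Es_def)
  have l: "Ls (Suc 0) = {[False]}"
  proof -
    have "w \<noteq> [] \<and> hd w = False \<and> length w = Suc 0 \<longleftrightarrow> w = [False]" for w
      by (cases w) auto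
    thus ?thesis by (auto simp: Ls_def)
  qed
  show ?case using v e l by simp
next
  case (Suc m)
  have V: "Vs (Suc m) \<union> Ls (Suc (Suc m)) = Vs (Suc (Suc m))"
    by (auto simp: Vs_def Ls_def le_Suc_eq)
  have E: "Es (Suc m) \<union> {(w @ [b], w) |w b. w \<in> Ls (Suc m)} = Es (Suc (Suc m))"
    by (auto simp: Es_def Ls_def less_Suc_eq)
  show ?case using Suc V E Ls_step by (simp add: Let_def)
qed

lemma T_verts_eq: "m \<ge> 1 \<Longrightarrow> T_verts m = Vs m"
  using Tree_char[of "m - 1"] by (simp add: T_verts_def)

lemma T_edges_eq: "m \<ge> 1 \<Longrightarrow> T_edges m = Es m"
  using Tree_char[of "m - 1"] by (simp add: T_edges_def)




context qfP begin

lemma D4: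
  assumes w: "periodic f w" "w \<noteq> 0" and t: "t ^ q = t" "t ^ (2 ^ k) = 1"
    and tw: "periodic f (t * w)"
  shows "t = 1"
proof -
  obtain L1 where L1: "L1 \<ge> 1" "(f ^^ L1) w = w" using w(1) unfolding periodic_def by blast
  obtain L2 where L2: "L2 \<ge> 1" "(f ^^ L2) (t * w) = t * w" using tw unfolding periodic_def by blast
  define N where "N = L1 * (L2 * (k + 1))"
  have N1: "(f ^^ N) w = w" unfolding N_def by (rule per_mult[OF L1(2)])
  have "N = L2 * (L1 * (k + 1))" unfolding N_def by (simp only: mult.left_commute)
  hence N2: "(f ^^ N) (t * w) = t * w" using per_mult[OF L2(2)] by simp
  have "1 * (1 * (k + 1)) \<le> N" unfolding N_def using L1 L2 by (intro mult_le_mono) auto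
  hence kN: "k \<le> N" by simp
  have "(2::nat) ^ N = 2 ^ k * 2 ^ (N - k)" using kN by (simp add: power_add[symmetric])
  hence "t ^ (2 ^ N) = (t ^ (2 ^ k)) ^ (2 ^ (N - k))" by (simp add: power_mult)
  hence tN: "t ^ (2 ^ N) = 1" using t by simp
  have "t * w = w" using funpow_scale[OF t(1), of N w] N1 N2 tN by simp
  thus ?thesis using w(2) by simp
qed

lemma t_q1: assumes "t ^ q = t" "t \<noteq> 0" shows "(t::'a) ^ (q - 1) = 1"
proof -
  have "q = Suc (q - 1)" using q_ge by simp
  hence "t ^ q = t * t ^ (q - 1)" by (metis power_Suc)
  thus ?thesis using assms by simp
qed

lemma t2s:
  assumes "t ^ q = t" "t \<noteq> 0" "(t::'a) ^ (2 ^ k) = 1"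
  shows "t ^ (2 ^ s) = 1"
proof (cases "k \<le> s")
  case True
  have "(2::nat) ^ s = 2 ^ k * 2 ^ (s - k)" using True by (simp add: power_add[symmetric])
  hence "t ^ (2 ^ s) = (t ^ (2 ^ k)) ^ (2 ^ (s - k))" by (simp add: power_mult)
  thus ?thesis using assms by simp
next
  case False
  define a where "a = t ^ (2 ^ s)"
  have "a ^ r = t ^ (q - 1)" using sr by (simp add: a_def power_mult)
  hence ar: "a ^ r = 1" using t_q1 assms by simp
  have "(2::nat) ^ k = 2 ^ s * 2 ^ (k - s)" using False by (simp add: power_add[symmetric])
  hence "a ^ (2 ^ (k - s)) = t ^ (2 ^ k)" by (simp add: a_def power_mult)
  hence ak: "a ^ (2 ^ (k - s)) = 1" using assms by simp
  have cop: "coprime r (2 ^ (k - s))" using r_odd by (simp add: coprime_power_right_iff)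
  have "r \<noteq> 0" using odd_pos[OF r_odd] by simp
  have "a = 1" by (rule pow_coprime_one[OF ar ak cop \<open>r \<noteq> 0\<close>])
  thus ?thesis by (simp add: a_def)
qed

lemma D3':
  assumes v: "(f ^^ k) v = P"
  shows "\<exists>w t. periodic f w \<and> (f ^^ k) w = P \<and> t ^ q = t \<and> t \<noteq> 0 \<and> v = t * w \<and> t ^ (2 ^ k) = 1"
proof -
  obtain w t where wt: "periodic f w" "(f ^^ k) w = P" "t ^ q = t" "t \<noteq> 0" "v = t * w"
    using D3[OF v] by blast
  have "P = t ^ (2 ^ k) * P" using funpow_scale[OF wt(3), of k w] wt v by simp
  hence "(t ^ (2 ^ k) - 1) * P = 0" by (simp add: algebra_simps)
  hence "t ^ (2 ^ k) = 1" using P_nz by simp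
  thus ?thesis using wt by blast
qed

definition tr :: "nat \<Rightarrow> 'a \<Rightarrow> bool" where
  "tr n v \<longleftrightarrow> (f ^^ n) v = P \<and> (\<forall>j<n. \<not> periodic f ((f ^^ j) v))"

lemma T1: assumes "tr k v" shows "k \<le> s"
proof (rule ccontr)
  assume ks: "\<not> k \<le> s"
  obtain w t where wt: "periodic f w" "(f ^^ k) w = P" "t ^ q = t" "t \<noteq> 0" "v = t * w" "t ^ (2 ^ k) = 1"
    using D3' assms unfolding tr_def by blast
  have ts: "t ^ (2 ^ s) = 1" using t2s wt by blast
  have "(f ^^ s) v = (f ^^ s) w" using funpow_scale[OF wt(3), of s w] wt(5) ts by simp
  hence "periodic f ((f ^^ s) v)" using per_iter[OF wt(1)] by simp
  thus False using assms ks unfolding tr_def by auto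
qed

lemma tr0: "tr 0 v \<longleftrightarrow> v = P" by (simp add: tr_def)

lemma fs: "(f ^^ Suc n) x = (f ^^ n) (f x)"
  by (simp only: funpow_Suc_right comp_apply)

lemma tr_unique: assumes "tr k v" "tr k' v" shows "k = k'"
proof (rule ccontr)
  assume "k \<noteq> k'"
  hence "k < k' \<or> k' < k" by arith
  thus False
  proof
    assume kk: "k < k'"
    have "\<not> periodic f ((f ^^ k) v)" using assms(2) kk unfolding tr_def by blast
    moreover have "(f ^^ k) v = P" using assms(1) unfolding tr_def by blast
    ultimately show False using P_per by simp
  next
    assume kk: "k' < k"
    have "\<not> periodic f ((f ^^ k') v)" using assms(1) kk unfolding tr_def by blast
    moreover have "(f ^^ k') v = P" using assms(2) unfolding tr_def by blast
    ultimately show False using P_per by simp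
  qed
qed

lemma tr_step: assumes "tr (Suc k) v" shows "tr k (f v)"
  unfolding tr_def
proof
  show "(f ^^ k) (f v) = P" using assms unfolding tr_def fs by blast
  show "\<forall>j<k. \<not> periodic f ((f ^^ j) (f v))"
  proof (intro allI impI)
    fix j assume "j < k"
    hence "\<not> periodic f ((f ^^ Suc j) v)" using assms unfolding tr_def by blast
    thus "\<not> periodic f ((f ^^ j) (f v))" unfolding fs .
  qed
qed

lemma tr_back: assumes "tr k v" "f u = v" "\<not> periodic f u" shows "tr (Suc k) u"
  unfolding tr_def
proof
  show "(f ^^ Suc k) u = P" using assms unfolding tr_def fs by blast
  show "\<forall>j<Suc k. \<not> periodic f ((f ^^ j) u)"
  proof (intro allI impI)
    fix j assume j: "j < Suc k"
    show "\<not> periodic f ((f ^^ j) u)"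
    proof (cases j)
      case 0 thus ?thesis using assms by simp
    next
      case (Suc i)
      hence "(f ^^ j) u = (f ^^ i) v" using assms(2) fs by simp
      moreover have "i < k" using j Suc by simp
      ultimately show ?thesis using assms(1) unfolding tr_def by auto
    qed
  qed
qed

lemma tr_nonper: assumes "tr n v" "n \<ge> 1" shows "\<not> periodic f v"
proof -
  have "\<forall>j<n. \<not> periodic f ((f ^^ j) v)" using assms(1) unfolding tr_def by blast
  moreover have "0 < n" using assms(2) by simp
  ultimately have "\<not> periodic f ((f ^^ 0) v)" by blast
  thus ?thesis by simp
qed

lemma nonper_pre: assumes "f u = v" "\<not> periodic f v" shows "\<not> periodic f u"
proof
  assume "periodic f u"
  hence "periodic f (f u)" by (rule per_f)
  thus False using assms by simp
qed

lemma tr_nz: assumes "tr n v" shows "v \<noteq> 0"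
proof -
  have "(f ^^ n) v = P" using assms by (simp add: tr_def)
  thus ?thesis by (rule nz)
qed

lemma tree_mem: "v \<in> tree_at f P \<longleftrightarrow> (\<exists>k. tr k v)"
proof
  assume "v \<in> tree_at f P"
  then consider "v = P" | "\<not> periodic f v" "first_periodic f v P" unfolding tree_at_def by blast
  thus "\<exists>k. tr k v"
  proof cases
    case 1 thus ?thesis using tr0 by blast
  next
    case 2
    then obtain n where "(f ^^ n) v = P" "\<forall>k<n. \<not> periodic f ((f ^^ k) v)"
      unfolding first_periodic_def by blast
    thus ?thesis unfolding tr_def by blast
  qed
next
  assume "\<exists>k. tr k v"
  then obtain k where k: "tr k v" by blast
  show "v \<in> tree_at f P"
  proof (cases k)
    case 0 thus ?thesis using k tr0 by (simp add: tree_at_def)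
  next
    case (Suc m)
    hence "\<not> periodic f v" using tr_nonper[OF k] by simp
    moreover have "first_periodic f v P" unfolding first_periodic_def
      using k P_per unfolding tr_def by (intro exI[of _ k]) simp
    ultimately show ?thesis by (simp add: tree_at_def)
  qed
qed

lemma T4: assumes "tr k v" "1 \<le> k" "k < s" shows "\<exists>u. f u = v"
proof -
  obtain w t where wt: "periodic f w" "(f ^^ k) w = P" "t ^ q = t" "t \<noteq> 0" "v = t * w" "t ^ (2 ^ k) = 1"
    using D3' assms unfolding tr_def by blast
  have "(2::nat) ^ (s - 1) = 2 ^ k * 2 ^ (s - 1 - k)" using assms by (simp add: power_add[symmetric])
  hence "t ^ (2 ^ (s - 1)) = (t ^ (2 ^ k)) ^ (2 ^ (s - 1 - k))" by (simp add: power_mult)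
  hence "t ^ (2 ^ (s - 1)) = 1" using wt by simp
  then obtain u0 where u0: "u0 ^ 2 = t" "u0 ^ q = u0" using sqrt_ex by blast
  obtain w' where w': "f w' = w" using pred_per[OF wt(1)] by blast
  have e1: "f (u0 * w') = u0 ^ 2 * f w'" by (rule f_scale[OF u0(2)])
  also have "\<dots> = v" using u0(1) w' wt(5) by simp
  finally show ?thesis by blast
qed

definition wP :: 'a where "wP = (SOME w. periodic f w \<and> f w = P)"

lemma wP: "periodic f wP" "f wP = P"
  using someI_ex[OF pred_per[OF P_per]] unfolding wP_def by auto

lemma wP_nz: "wP \<noteq> 0" using nz[of 1 wP] wP by simp

definition P1 :: 'a where "P1 = - wP"

lemma P1: "f P1 = P" "\<not> periodic f P1"
proof -
  show "f P1 = P" using wP f_neg by (simp add: P1_def)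
  show "\<not> periodic f P1"
  proof
    assume h: "periodic f P1"
    have m1: "(- 1 :: 'a) ^ q = - 1" using q_odd by simp
    have m2: "(- 1 :: 'a) ^ (2 ^ 1) = 1" by simp
    have "periodic f ((- 1) * wP)" using h by (simp add: P1_def)
    hence "(- 1 :: 'a) = 1" using D4[OF wP(1) wP_nz m1 m2] by blast
    thus False using neg_ne[of 1] by simp
  qed
qed

lemma P1_uniq: assumes "f u = P" "\<not> periodic f u" shows "u = P1"
proof -
  have "u = wP \<or> u = - wP" using fiber2[of u wP] assms wP P_nz by simp
  thus ?thesis using assms wP by (auto simp: P1_def)
qed

lemma tr1: "tr (Suc 0) v \<longleftrightarrow> v = P1"
proof
  assume h: "tr (Suc 0) v"
  have "f v = P" using h unfolding tr_def by simp
  moreover have "\<not> periodic f v" using tr_nonper[OF h] by simp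
  ultimately show "v = P1" using P1_uniq by blast
next
  assume "v = P1"
  thus "tr (Suc 0) v" using P1 unfolding tr_def by auto
qed

end



context qfP begin

definition rep :: "'a \<Rightarrow> 'a" where "rep x = (SOME y. y = x \<or> y = - x)"
definition bit :: "'a \<Rightarrow> bool" where "bit x \<longleftrightarrow> x \<noteq> rep x"

lemma rep_in: "rep x = x \<or> rep x = - x"
  unfolding rep_def by (rule someI_ex) blast

lemma rep_neg: "rep (- x) = rep x"
proof -
  have "(\<lambda>y. y = - x \<or> y = - (- x)) = (\<lambda>y. y = x \<or> y = - x)" by auto
  thus ?thesis unfolding rep_def by simp
qed

lemma bit_neg: assumes "x \<noteq> 0" shows "bit (- x) \<longleftrightarrow> \<not> bit x"
proof -
  have ne: "- x \<noteq> x" using neg_ne[OF assms] .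
  from rep_in[of x] show ?thesis
  proof
    assume "rep x = x" thus ?thesis using ne rep_neg[of x] by (simp add: bit_def)
  next
    assume "rep x = - x" thus ?thesis using ne rep_neg[of x] by (auto simp: bit_def)
  qed
qed

definition dep :: "'a \<Rightarrow> nat" where "dep v = (THE n. tr n v)"

lemma dep_eq: "tr n v \<Longrightarrow> dep v = n"
  unfolding dep_def using tr_unique by blast

definition phi :: "'a \<Rightarrow> bool list" where "phi v = lab f bit (dep v) v"

lemma lab_inj: "tr n v \<Longrightarrow> tr n v' \<Longrightarrow> lab f bit n v = lab f bit n v' \<Longrightarrow> v = v'"
proof (induction n arbitrary: v v')
  case 0 thus ?case using tr0 by simp
next
  case (Suc n)
  show ?case
  proof (cases n)
    case 0 thus ?thesis using Suc.prems tr1 by simp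
  next
    case (Suc m)
    have l: "lab f bit (Suc m) (f v) = lab f bit (Suc m) (f v') \<and> bit v = bit v'"
      using Suc.prems(3) \<open>n = Suc m\<close> by simp
    have t1: "tr n (f v)" using tr_step Suc.prems(1) by simp
    have t2: "tr n (f v')" using tr_step Suc.prems(2) by simp
    have "lab f bit n (f v) = lab f bit n (f v')" using l \<open>n = Suc m\<close> by simp
    hence ff: "f v = f v'" using Suc.IH[OF t1 t2] by simp
    have fnz: "f v \<noteq> 0" using tr_nz[OF t1] .
    have "v' = v \<or> v' = - v" using fiber2[of v' v] ff fnz by simp
    moreover have "v \<noteq> 0" using tr_nz Suc.prems(1) by blast
    ultimately show ?thesis using l bit_neg by auto
  qed
qed

lemma lab_surj:
  "n \<le> s \<Longrightarrow> length w = n \<Longrightarrow> (n \<ge> 1 \<longrightarrow> w \<noteq> [] \<and> hd w = False) \<Longrightarrow>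
     \<exists>v. tr n v \<and> lab f bit n v = w"
proof (induction n arbitrary: w)
  case 0 thus ?case using tr0 by auto
next
  case (Suc n)
  show ?case
  proof (cases n)
    case 0
    hence "w = [False]" using Suc.prems by (cases w) auto
    thus ?thesis using tr1 0 by auto
  next
    case (Suc m)
    have wne: "w \<noteq> []" using Suc.prems by simp
    define w0 where "w0 = butlast w"
    define b where "b = last w"
    have we: "w = w0 @ [b]" using wne by (simp add: w0_def b_def)
    have lw0: "length w0 = n" using Suc.prems(2) by (simp add: w0_def)
    have w0ne: "w0 \<noteq> []" using lw0 \<open>n = Suc m\<close> by auto
    have hw0: "hd w0 = False" using Suc.prems(3) we w0ne by simp
    obtain v0 where v0: "tr n v0" "lab f bit n v0 = w0"
      using Suc.IH[of w0] Suc.prems(1) lw0 w0ne hw0 by auto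
    obtain u where u: "f u = v0" using T4[OF v0(1)] \<open>n = Suc m\<close> Suc.prems(1) by auto
    have v0np: "\<not> periodic f v0" using tr_nonper[OF v0(1)] \<open>n = Suc m\<close> by simp
    have unp: "\<not> periodic f u" using nonper_pre[OF u v0np] .
    have u2: "f (- u) = v0" using u f_neg by simp
    have unp2: "\<not> periodic f (- u)" using nonper_pre[OF u2 v0np] .
    have tu: "tr (Suc n) u" using tr_back[OF v0(1) u unp] .
    have tu2: "tr (Suc n) (- u)" using tr_back[OF v0(1) u2 unp2] .
    have unz: "u \<noteq> 0" using tr_nz[OF tu] .
    define x where "x = (if bit u = b then u else - u)"
    have tx: "tr (Suc n) x" using tu tu2 by (simp add: x_def)
    have fx: "f x = v0" using u u2 by (simp add: x_def)
    have bx: "bit x = b" using bit_neg[OF unz] by (auto simp: x_def)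
    have "lab f bit (Suc n) x = lab f bit n (f x) @ [bit x]" using \<open>n = Suc m\<close> by simp
    also have "\<dots> = w" using fx bx v0(2) we by simp
    finally show ?thesis using tx by blast
  qed
qed

lemma tree_tr: "v \<in> tree_at f P \<Longrightarrow> tr (dep v) v"
  using tree_mem dep_eq by blast

lemma iso: "iso_to_T f (tree_at f P) P s"
proof -
  have s1: "s \<ge> 1" by (rule s_pos)
  have bij: "bij_betw phi (tree_at f P) (Vs s)"
    unfolding bij_betw_def
  proof
    show "inj_on phi (tree_at f P)"
    proof (rule inj_onI)
      fix v v' assume v: "v \<in> tree_at f P" and v': "v' \<in> tree_at f P" and e: "phi v = phi v'"
      have "dep v = dep v'" using e lab_len unfolding phi_def by metis
      thus "v = v'" using lab_inj tree_tr[OF v] tree_tr[OF v'] e unfolding phi_def by metis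
    qed
    show "phi ` tree_at f P = Vs s"
    proof
      show "phi ` tree_at f P \<subseteq> Vs s"
      proof
        fix w assume "w \<in> phi ` tree_at f P"
        then obtain v where v: "v \<in> tree_at f P" "w = phi v" by blast
        have t: "tr (dep v) v" using tree_tr[OF v(1)] .
        have "dep v \<le> s" using T1[OF t] .
        moreover have "dep v \<ge> 1 \<longrightarrow> w \<noteq> [] \<and> hd w = False" using lab_hd[of "dep v" f bit v] v(2) unfolding phi_def by simp
        moreover have "length w = dep v" using v(2) lab_len unfolding phi_def by metis
        ultimately show "w \<in> Vs s" unfolding Vs_def by (cases "dep v") auto
      qed
    next
      show "Vs s \<subseteq> phi ` tree_at f P"
      proof
        fix w assume w: "w \<in> Vs s"
        have "length w \<le> s" "length w \<ge> 1 \<longrightarrow> w \<noteq> [] \<and> hd w = False"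
          using w s1 unfolding Vs_def by auto
        then obtain v where v: "tr (length w) v" "lab f bit (length w) v = w"
          using lab_surj by blast
        have "v \<in> tree_at f P" using tree_mem v(1) by blast
        moreover have "phi v = w" using v dep_eq unfolding phi_def by simp
        ultimately show "w \<in> phi ` tree_at f P" by blast
      qed
    qed
  qed
  have phiP: "phi P = []" using dep_eq[of 0 P] tr0 unfolding phi_def by simp
  have edges: "\<forall>u\<in>tree_at f P. \<forall>v\<in>tree_at f P. (u \<noteq> P \<and> f u = v) \<longleftrightarrow> (phi u, phi v) \<in> Es s"
  proof (intro ballI)
    fix u v assume u: "u \<in> tree_at f P" and v: "v \<in> tree_at f P"
    have tu: "tr (dep u) u" and tv: "tr (dep v) v" using tree_tr u v by auto
    have du: "dep u \<le> s" using T1[OF tu] .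
    show "(u \<noteq> P \<and> f u = v) \<longleftrightarrow> (phi u, phi v) \<in> Es s"
    proof
      assume h: "u \<noteq> P \<and> f u = v"
      obtain m where m: "dep u = Suc m" using h tu tr0 by (cases "dep u") auto
      have tfu: "tr m v" using tr_step[of m u] tu m h by simp
      have dv: "dep v = m" using dep_eq[OF tfu] .
      show "(phi u, phi v) \<in> Es s"
      proof (cases m)
        case 0
        have "phi u = [False]" "phi v = []" using m dv 0 unfolding phi_def by simp_all
        thus ?thesis unfolding Es_def by auto
      next
        case (Suc m')
        have pu: "phi u = phi v @ [bit u]" using m dv Suc h unfolding phi_def by simp
        have "phi v \<noteq> [] \<and> hd (phi v) = False" using lab_hd[of m] Suc dv unfolding phi_def by simp
        moreover have "length (phi v) < s" using lab_len[of f bit m v] dv du m unfolding phi_def by simp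
        ultimately show ?thesis using pu unfolding Es_def by auto
      qed
    next
      assume h: "(phi u, phi v) \<in> Es s"
      then obtain b where b: "phi u = phi v @ [b]"
        and c: "(phi v = [] \<and> b = False) \<or> (phi v \<noteq> [] \<and> hd (phi v) = False \<and> length (phi v) < s)"
        unfolding Es_def by auto
      have ldu: "dep u = Suc (dep v)" using b lab_len unfolding phi_def by (metis length_append_singleton)
      have uP: "u \<noteq> P" using ldu tu tr0 dep_eq[of 0 P] by auto
      have "f u = v"
      proof (cases "dep v")
        case 0
        hence "v = P" using tv tr0 by simp
        moreover have "tr 0 (f u)" using tr_step[of 0 u] tu ldu 0 by simp
        ultimately show ?thesis using tr0 by simp
      next
        case (Suc m)
        have "phi u = lab f bit (Suc m) (f u) @ [bit u]" using ldu Suc unfolding phi_def by simp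
        hence "lab f bit (Suc m) (f u) = lab f bit (Suc m) v" using b Suc unfolding phi_def by simp
        moreover have "tr (Suc m) (f u)" using tr_step[of "Suc m" u] tu ldu Suc by simp
        moreover have "tr (Suc m) v" using tv Suc by simp
        ultimately show ?thesis using lab_inj by blast
      qed
      thus "u \<noteq> P \<and> f u = v" using uP by simp
    qed
  qed
  show ?thesis unfolding iso_to_T_def T_verts_eq[OF s1] T_edges_eq[OF s1]
    using bij phiP edges by blast
qed

end

theorem theorem12:
  fixes q s r :: nat and c :: "'a :: {finite, field}" and f :: "'a \<Rightarrow> 'a" and P :: 'a
  assumes q_pow: "\<exists>p k. prime p \<and> odd p \<and> k \<ge> 1 \<and> q = p ^ k"
    and card: "card (UNIV :: 'a set) = q ^ 2"
    and sr: "q - 1 = 2 ^ s * r" and r_odd: "odd r"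
    and c_Fq: "c ^ q = c" and c_nz: "c \<noteq> 0"
    and f_def: "\<And>x. f x = c * (x ^ (q + 1) - x ^ 2)"
    and P_per: "periodic f P"
    and P_comp: "\<not> same_component f P 0"
  shows "iso_to_T f (tree_at f P) P s"
proof -
  obtain p k where pk: "prime p" "odd p" "k \<ge> 1" "q = p ^ k" using q_pow by blast
  interpret qfP q s r c f p k P
    by unfold_locales (use pk card sr r_odd c_Fq c_nz f_def P_per P_comp in auto)
  show ?thesis by (rule iso)
qed


end
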